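(* Let $(Q,F)$ be a finite ice quiver with $Q_0=\{1,\dots,m\}$, $F_0=\{n+1,\dots,m\}$ and Euler matrix $\widehat B=(b_{ij})$, and let $1\le v\le n$ be an unfrozen vertex not incident to loops or $2$-cycles. Let $E_v=(e_{ij})$ be the $m\times m$ matrix with $e_{ij}=\delta_{ij}$ for $j\ne v$, $e_{iv}=[b_{iv}]_+$ for $i\neq v$, and $e_{vv}=-1$. Then the Euler matrix of the extended Fomin–Zelevinsky mutation $\mu^{\mathrm{FZ}}_v(Q,F)$ equals $E_v\widehat BE_v^T$.
   Context: $[x]_+=\max\{x,0\}$. The Euler matrix of a finite ice quiver $(Q,F)$ (with $F$ the frozen subquiver): $b_{ii}=0$ for $i\le n$, $b_{ii}=1$ for $i>n$, and $b_{ij}=\#\{\text{unfrozen arrows } i\to j\}-\#\{\text{arrows } j\to i\}$ for $i\neq j$. Extended Fomin–Zelevinsky mutation $\mu^{\mathrm{FZ}}_v(Q,F)$: (1) for each pair of arrows $\alpha:u\to v$, $\beta:v\to w$ add an unfrozen arrow $u\to w$; (2) reverse all arrows incident to $v$; (3) remove a maximal collection of $2$-cycles consisting of unfrozen arrows; (4) replace each $2$-cycle in a maximal collection of $2$-cycles with exactly one frozen arrow by a frozen arrow pointing in the direction of the unfrozen arrow of that $2$-cycle. *)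

theory Defs
  imports Main
begin

text \<open>A finite ice quiver (Q,F) with Q_0 = {1..m}, F_0 = {n+1..m} is represented
  (up to isomorphism) by arrow counts: U i j = number of unfrozen arrows i \<rightarrow> j
  (arrows in Q_1 \<setminus> F_1) and Fr i j = number of frozen arrows i \<rightarrow> j (arrows of F_1).\<close>

definition ice_quiver :: "nat \<Rightarrow> nat \<Rightarrow> (nat \<Rightarrow> nat \<Rightarrow> nat) \<Rightarrow> (nat \<Rightarrow> nat \<Rightarrow> nat) \<Rightarrow> bool" where
  "ice_quiver m n U Fr \<longleftrightarrow> n \<le> m
     \<and> (\<forall>i j. U i j \<noteq> 0 \<longrightarrow> i \<in> {1..m} \<and> j \<in> {1..m})
     \<and> (\<forall>i j. Fr i j \<noteq> 0 \<longrightarrow> i \<in> {n+1..m} \<and> j \<in> {n+1..m})"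

definition arrows :: "(nat \<Rightarrow> nat \<Rightarrow> nat) \<Rightarrow> (nat \<Rightarrow> nat \<Rightarrow> nat) \<Rightarrow> nat \<Rightarrow> nat \<Rightarrow> nat" where
  "arrows U Fr i j = U i j + Fr i j"

definition euler_matrix :: "nat \<Rightarrow> (nat \<Rightarrow> nat \<Rightarrow> nat) \<Rightarrow> (nat \<Rightarrow> nat \<Rightarrow> nat) \<Rightarrow> nat \<Rightarrow> nat \<Rightarrow> int" where
  "euler_matrix n U Fr i j =
     (if i = j then (if i \<le> n then 0 else 1)
      else int (U i j) - int (arrows U Fr j i))"

definition fz_step1 :: "nat \<Rightarrow> (nat \<Rightarrow> nat \<Rightarrow> nat) \<Rightarrow> (nat \<Rightarrow> nat \<Rightarrow> nat) \<Rightarrow> nat \<Rightarrow> nat \<Rightarrow> nat" where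
  "fz_step1 v U Fr u w = U u w + arrows U Fr u v * arrows U Fr v w"

definition reverse_at :: "nat \<Rightarrow> (nat \<Rightarrow> nat \<Rightarrow> nat) \<Rightarrow> nat \<Rightarrow> nat \<Rightarrow> nat" where
  "reverse_at v A u w =
     (if u = v \<and> w = v then A v v else if u = v \<or> w = v then A w u else A u w)"

definition remove_2cycles :: "(nat \<Rightarrow> nat \<Rightarrow> nat) \<Rightarrow> nat \<Rightarrow> nat \<Rightarrow> nat" where
  "remove_2cycles A u w = (if u \<noteq> w then A u w - min (A u w) (A w u) else A u w)"

text \<open>Step (4): number of 2-cycles consisting of an unfrozen arrow u \<rightarrow> w and a frozen
  arrow w \<rightarrow> u in a maximal collection.\<close>
definition mixed_pairs :: "(nat \<Rightarrow> nat \<Rightarrow> nat) \<Rightarrow> (nat \<Rightarrow> nat \<Rightarrow> nat) \<Rightarrow> nat \<Rightarrow> nat \<Rightarrow> nat" where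
  "mixed_pairs A Fr u w = (if u \<noteq> w then min (A u w) (Fr w u) else 0)"

definition fz_mutation :: "nat \<Rightarrow> (nat \<Rightarrow> nat \<Rightarrow> nat) \<Rightarrow> (nat \<Rightarrow> nat \<Rightarrow> nat)
    \<Rightarrow> (nat \<Rightarrow> nat \<Rightarrow> nat) \<times> (nat \<Rightarrow> nat \<Rightarrow> nat)" where
  "fz_mutation v U Fr =
     (let U2 = reverse_at v (fz_step1 v U Fr);
          Fr2 = reverse_at v Fr;
          U3 = remove_2cycles U2;
          p = mixed_pairs U3 Fr2
      in (\<lambda>u w. U3 u w - p u w, \<lambda>u w. Fr2 u w - p w u + p u w))"

definition E_mat :: "nat \<Rightarrow> (nat \<Rightarrow> nat \<Rightarrow> int) \<Rightarrow> nat \<Rightarrow> nat \<Rightarrow> int" where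
  "E_mat v B i j =
     (if j \<noteq> v then (if i = j then 1 else 0)
      else if i \<noteq> v then max (B i v) 0 else -1)"

end

theory Submission
  imports Defs
begin

lemma sumE:
  assumes "i \<in> {1..m}" "v \<in> {1..(m::nat)}"
  shows "(\<Sum>k\<in>{1..m}. E_mat v B i k * g k) = (if i = v then - g v else g i + max (B i v) 0 * g v)"
proof -
  have "(\<Sum>k\<in>{1..m}. E_mat v B i k * g k) = E_mat v B i v * g v + (\<Sum>k\<in>{1..m}-{v}. E_mat v B i k * g k)"
    by (rule sum.remove) (use assms in auto)
  also have "(\<Sum>k\<in>{1..m}-{v}. E_mat v B i k * g k) = (\<Sum>k\<in>{1..m}-{v}. if k = i then g k else 0)"
    by (rule sum.cong) (auto simp: E_mat_def)
  also have "\<dots> = (if i = v then 0 else g i)"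
    using assms by (simp add: sum.delta)
  finally show ?thesis by (auto simp: E_mat_def)
qed

lemma mut_euler:
  assumes "i \<noteq> j"
  shows "euler_matrix n (fst (fz_mutation v U Fr)) (snd (fz_mutation v U Fr)) i j =
     int (reverse_at v (fz_step1 v U Fr) i j) - int (reverse_at v (fz_step1 v U Fr) j i)
     - int (reverse_at v Fr j i)"
  using assms
  unfolding euler_matrix_def fz_mutation_def Let_def arrows_def remove_2cycles_def mixed_pairs_def
  by (auto simp: of_nat_diff)

theorem lemma4p2:
  fixes m n v :: nat and U Fr :: "nat \<Rightarrow> nat \<Rightarrow> nat"
  assumes "ice_quiver m n U Fr"
    and "1 \<le> v" and "v \<le> n"
    and "arrows U Fr v v = 0"
    and "\<forall>u. u \<noteq> v \<longrightarrow> arrows U Fr u v = 0 \<or> arrows U Fr v u = 0"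
    and "i \<in> {1..m}" and "j \<in> {1..m}"
  shows "euler_matrix n (fst (fz_mutation v U Fr)) (snd (fz_mutation v U Fr)) i j =
    (\<Sum>k\<in>{1..m}. \<Sum>l\<in>{1..m}.
       E_mat v (euler_matrix n U Fr) i k * euler_matrix n U Fr k l * E_mat v (euler_matrix n U Fr) j l)"
proof -
  let ?B = "euler_matrix n U Fr"
  have vm: "v \<in> {1..m}" using assms(1-3) unfolding ice_quiver_def by auto
  have FrV: "Fr v x = 0" "Fr x v = 0" for x using assms(1-3) unfolding ice_quiver_def
    by fastforce+
  have Uvv: "U v v = 0" using assms(4) by (simp add: arrows_def)
  have nc: "U u v = 0 \<or> U v u = 0" if "u \<noteq> v" for u using assms(5) that by (auto simp: arrows_def FrV)
  have "(\<Sum>k\<in>{1..m}. \<Sum>l\<in>{1..m}. E_mat v ?B i k * ?B k l * E_mat v ?B j l)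
     = (\<Sum>k\<in>{1..m}. E_mat v ?B i k * (\<Sum>l\<in>{1..m}. E_mat v ?B j l * ?B k l))"
    by (simp add: sum_distrib_left mult.commute mult.left_commute)
  also have "\<dots> = (\<Sum>k\<in>{1..m}. E_mat v ?B i k *
      (if j = v then - ?B k v else ?B k j + max (?B j v) 0 * ?B k v))"
    using sumE[OF assms(7) vm] by simp
  also have "\<dots> = (if i = v then - (if j = v then - ?B v v else ?B v j + max (?B j v) 0 * ?B v v)
      else (if j = v then - ?B i v else ?B i j + max (?B j v) 0 * ?B i v)
        + max (?B i v) 0 * (if j = v then - ?B v v else ?B v j + max (?B j v) 0 * ?B v v))"
    by (rule sumE[OF assms(6) vm])
  finally have R: "(\<Sum>k\<in>{1..m}. \<Sum>l\<in>{1..m}. E_mat v ?B i k * ?B k l * E_mat v ?B j l) = \<dots>" .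
  have Bvv: "?B v v = 0" using assms(3) by (simp add: euler_matrix_def)
  have Biv: "?B x v = int (U x v) - int (U v x)" "?B v x = int (U v x) - int (U x v)"
    if "x \<noteq> v" for x using that FrV by (auto simp: euler_matrix_def arrows_def)
  have mB: "max (?B x v) 0 = int (U x v)" if "x \<noteq> v" for x
    using nc[OF that] Biv(1)[OF that] by auto
  have mB': "max (int (U x v) - int (U v x)) 0 = int (U x v)" if "x \<noteq> v" for x
    using nc[OF that] by auto
  have LD: "euler_matrix n U' F' x x = (if x \<le> n then 0 else 1)" for U' F' x by (simp add: euler_matrix_def)
  show ?thesis
  proof (cases "i = j")
    case True
    show ?thesis
    proof (cases "i = v")
      case True
      then show ?thesis unfolding R using \<open>i = j\<close> Bvv LD assms(3) by simp
    next
      case False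
      have s: "?B i v + ?B v i = 0" using Biv[OF False] by simp
      have "(\<Sum>k\<in>{1..m}. \<Sum>l\<in>{1..m}. E_mat v ?B i k * ?B k l * E_mat v ?B j l)
         = ?B i i + max (?B i v) 0 * (?B i v + ?B v i)"
        unfolding R using False \<open>i = j\<close> Bvv by (simp add: algebra_simps)
      then show ?thesis using s \<open>i = j\<close> LD by simp
    qed
  next
    case False
    have M: "euler_matrix n (fst (fz_mutation v U Fr)) (snd (fz_mutation v U Fr)) i j =
     int (reverse_at v (fz_step1 v U Fr) i j) - int (reverse_at v (fz_step1 v U Fr) j i)
     - int (reverse_at v Fr j i)" by (rule mut_euler[OF False])
    have S: "fz_step1 v U Fr x y = U x y + U x v * U v y" for x y
      using FrV by (simp add: fz_step1_def arrows_def)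
    show ?thesis
    proof (cases "i = v")
      case True
      with False have jv: "j \<noteq> v" by simp
      show ?thesis unfolding R M using True jv Bvv Biv[OF jv] mB[OF jv] FrV Uvv
        by (simp add: reverse_at_def S)
    next
      case iv: False
      show ?thesis
      proof (cases "j = v")
        case True
        show ?thesis unfolding R M using True iv Bvv Biv[OF iv] mB[OF iv] FrV Uvv
          by (simp add: reverse_at_def S)
      next
        case jv: False
        have Bij: "?B i j = int (U i j) - int (U j i) - int (Fr j i)"
          using False by (simp add: euler_matrix_def arrows_def)
        show ?thesis unfolding R M using jv iv False
          by (simp add: Bij Bvv Biv[OF iv] mB[OF iv] Biv[OF jv] mB'[OF iv] mB'[OF jv] reverse_at_def S algebra_simps)
      qed
    qed
  qed
qed

end
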